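(* (a) Let $(A,\circ)$ be an anti-pre-Lie algebra with sub-adjacent Lie algebra $(A,[-,-])$. Define a bilinear form $\mathcal B$ on $A\oplus A^*$ by $\mathcal B(x+a^*,y+b^* )=\langle x,b^*\rangle+\langle a^*,y\rangle$ for $x,y\in A$, $a^*,b^*\in A^*$. Then $\mathcal B$ is a nondegenerate commutative 2-cocycle on the semi-direct product Lie algebra $A\ltimes_{-\mathcal L^*_\circ}A^*$. (b) Conversely, let $(\mathfrak g,[-,-])$ be a Lie algebra and $(\rho,\mathfrak g^* )$ a representation of it on $\mathfrak g^*$. Suppose that the bilinear form $\mathcal B(x+a^*,y+b^* )=\langle x,b^*\rangle+\langle a^*,y\rangle$ on $\mathfrak g\oplus\mathfrak g^*$ is a commutative 2-cocycle on $\mathfrak g\ltimes_\rho\mathfrak g^*$. Then there is a compatible anti-pre-Lie algebra structure $(\mathfrak g,\circ)$ on $(\mathfrak g,[-,-])$ (i.e. $(\mathfrak g,\circ)$ is anti-pre-Lie and $x\circ y-y\circ x=[x,y]$) such that $\rho=-\mathcal L^*_\circ$.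
   Context: All vector spaces are finite-dimensional over a field $\mathbb F$ of characteristic $0$. An anti-pre-Lie algebra is a vector space $A$ with a bilinear operation $\circ$ such that, writing $[x,y]=x\circ y-y\circ x$, for all $x,y,z\in A$: (i) $x\circ(y\circ z)-y\circ(x\circ z)=[y,x]\circ z$, and (ii) $[x,y]\circ z+[y,z]\circ x+[z,x]\circ y=0$; $(A,[-,-])$ is then a Lie algebra (the sub-adjacent Lie algebra). $-\mathcal L^*_\circ$ denotes the dual of the representation $-\mathcal L_\circ$ ($\mathcal L_\circ(x)y=x\circ y$), i.e. $\langle -\mathcal L^*_\circ(x)a^*,y\rangle=\langle a^*,x\circ y\rangle$. For a representation $(\rho,V)$ of a Lie algebra $\mathfrak g$, the semi-direct product $\mathfrak g\ltimes_\rho V$ is $\mathfrak g\oplus V$ with bracket $[x+u,y+v]=[x,y]+\rho(x)v-\rho(y)u$. A commutative 2-cocycle on a Lie algebra is a symmetric bilinear form $\mathcal B$ with $\mathcal B([x,y],z)+\mathcal B([y,z],x)+\mathcal B([z,x],y)=0$. *)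

theory Defs
  imports Main
begin

text \<open>Coordinate model: a finite-dimensional vector space over the field 'a
  is 'n \<Rightarrow> 'a for a finite index type 'n; its dual is again 'n \<Rightarrow> 'a,
  with the canonical pairing below.\<close>

definition vadd :: "('n \<Rightarrow> 'a::field) \<Rightarrow> ('n \<Rightarrow> 'a) \<Rightarrow> ('n \<Rightarrow> 'a)" where
  "vadd x y = (\<lambda>i. x i + y i)"

definition vsub :: "('n \<Rightarrow> 'a::field) \<Rightarrow> ('n \<Rightarrow> 'a) \<Rightarrow> ('n \<Rightarrow> 'a)" where
  "vsub x y = (\<lambda>i. x i - y i)"

definition vscale :: "'a::field \<Rightarrow> ('n \<Rightarrow> 'a) \<Rightarrow> ('n \<Rightarrow> 'a)" where
  "vscale c x = (\<lambda>i. c * x i)"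

definition vzero :: "'n \<Rightarrow> 'a::field" where
  "vzero = (\<lambda>i. 0)"

definition pair :: "('n::finite \<Rightarrow> 'a::field) \<Rightarrow> ('n \<Rightarrow> 'a) \<Rightarrow> 'a" where
  "pair x a = (\<Sum>i\<in>UNIV. x i * a i)"

definition linear_map :: "(('n \<Rightarrow> 'a::field) \<Rightarrow> ('m \<Rightarrow> 'a)) \<Rightarrow> bool" where
  "linear_map f \<longleftrightarrow> (\<forall>x y. f (vadd x y) = vadd (f x) (f y)) \<and> (\<forall>c x. f (vscale c x) = vscale c (f x))"

definition bilinear_op :: "(('n \<Rightarrow> 'a::field) \<Rightarrow> ('n \<Rightarrow> 'a) \<Rightarrow> ('n \<Rightarrow> 'a)) \<Rightarrow> bool" where
  "bilinear_op m \<longleftrightarrow> (\<forall>x. linear_map (m x)) \<and> (\<forall>y. linear_map (\<lambda>x. m x y))"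

definition commutator :: "(('n \<Rightarrow> 'a::field) \<Rightarrow> ('n \<Rightarrow> 'a) \<Rightarrow> ('n \<Rightarrow> 'a)) \<Rightarrow> ('n \<Rightarrow> 'a) \<Rightarrow> ('n \<Rightarrow> 'a) \<Rightarrow> ('n \<Rightarrow> 'a)" where
  "commutator m x y = vsub (m x y) (m y x)"

definition anti_pre_Lie :: "(('n \<Rightarrow> 'a::field) \<Rightarrow> ('n \<Rightarrow> 'a) \<Rightarrow> ('n \<Rightarrow> 'a)) \<Rightarrow> bool" where
  "anti_pre_Lie m \<longleftrightarrow> bilinear_op m \<and>
     (\<forall>x y z. vsub (m x (m y z)) (m y (m x z)) = m (commutator m y x) z) \<and>
     (\<forall>x y z. vadd (vadd (m (commutator m x y) z) (m (commutator m y z) x)) (m (commutator m z x) y) = vzero)"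

definition lie_algebra :: "(('n \<Rightarrow> 'a::field) \<Rightarrow> ('n \<Rightarrow> 'a) \<Rightarrow> ('n \<Rightarrow> 'a)) \<Rightarrow> bool" where
  "lie_algebra br \<longleftrightarrow> bilinear_op br \<and> (\<forall>x. br x x = vzero) \<and>
     (\<forall>x y z. vadd (vadd (br x (br y z)) (br y (br z x))) (br z (br x y)) = vzero)"

definition representation :: "(('n \<Rightarrow> 'a::field) \<Rightarrow> ('n \<Rightarrow> 'a) \<Rightarrow> ('n \<Rightarrow> 'a))
     \<Rightarrow> (('n \<Rightarrow> 'a) \<Rightarrow> ('m \<Rightarrow> 'a) \<Rightarrow> ('m \<Rightarrow> 'a)) \<Rightarrow> bool" where
  "representation br \<rho> \<longleftrightarrow> (\<forall>v. linear_map (\<lambda>x. \<rho> x v)) \<and> (\<forall>x. linear_map (\<rho> x)) \<and>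
     (\<forall>x y v. \<rho> (br x y) v = vsub (\<rho> x (\<rho> y v)) (\<rho> y (\<rho> x v)))"

text \<open>- L^*: the dual of -L, i.e. \<langle>-L^*(x) a*, y\<rangle> = \<langle>a*, x \<circ> y\<rangle>;
  written out in coordinates via the standard basis.\<close>
definition neg_dual_L :: "(('n::finite \<Rightarrow> 'a::field) \<Rightarrow> ('n \<Rightarrow> 'a) \<Rightarrow> ('n \<Rightarrow> 'a))
     \<Rightarrow> ('n \<Rightarrow> 'a) \<Rightarrow> ('n \<Rightarrow> 'a) \<Rightarrow> ('n \<Rightarrow> 'a)" where
  "neg_dual_L m x a = (\<lambda>j. pair (m x (\<lambda>k. if k = j then 1 else 0)) a)"

definition sd_bracket :: "(('n \<Rightarrow> 'a::field) \<Rightarrow> ('n \<Rightarrow> 'a) \<Rightarrow> ('n \<Rightarrow> 'a))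
     \<Rightarrow> (('n \<Rightarrow> 'a) \<Rightarrow> ('m \<Rightarrow> 'a) \<Rightarrow> ('m \<Rightarrow> 'a))
     \<Rightarrow> ('n \<Rightarrow> 'a) \<times> ('m \<Rightarrow> 'a) \<Rightarrow> ('n \<Rightarrow> 'a) \<times> ('m \<Rightarrow> 'a) \<Rightarrow> ('n \<Rightarrow> 'a) \<times> ('m \<Rightarrow> 'a)" where
  "sd_bracket br \<rho> u v = (br (fst u) (fst v), vsub (\<rho> (fst u) (snd v)) (\<rho> (fst v) (snd u)))"

definition padd :: "('n \<Rightarrow> 'a::field) \<times> ('m \<Rightarrow> 'a) \<Rightarrow> ('n \<Rightarrow> 'a) \<times> ('m \<Rightarrow> 'a) \<Rightarrow> ('n \<Rightarrow> 'a) \<times> ('m \<Rightarrow> 'a)" where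
  "padd u v = (vadd (fst u) (fst v), vadd (snd u) (snd v))"

definition pscale :: "'a::field \<Rightarrow> ('n \<Rightarrow> 'a) \<times> ('m \<Rightarrow> 'a) \<Rightarrow> ('n \<Rightarrow> 'a) \<times> ('m \<Rightarrow> 'a)" where
  "pscale c u = (vscale c (fst u), vscale c (snd u))"

definition comm_2cocycle :: "(('n \<Rightarrow> 'a::field) \<times> ('m \<Rightarrow> 'a) \<Rightarrow> ('n \<Rightarrow> 'a) \<times> ('m \<Rightarrow> 'a) \<Rightarrow> ('n \<Rightarrow> 'a) \<times> ('m \<Rightarrow> 'a))
     \<Rightarrow> (('n \<Rightarrow> 'a) \<times> ('m \<Rightarrow> 'a) \<Rightarrow> ('n \<Rightarrow> 'a) \<times> ('m \<Rightarrow> 'a) \<Rightarrow> 'a) \<Rightarrow> bool" where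
  "comm_2cocycle br B \<longleftrightarrow>
     (\<forall>u v w. B (padd u v) w = B u w + B v w) \<and> (\<forall>c u w. B (pscale c u) w = c * B u w) \<and>
     (\<forall>u v. B u v = B v u) \<and>
     (\<forall>x y z. B (br x y) z + B (br y z) x + B (br z x) y = 0)"

definition nondegenerate :: "(('n \<Rightarrow> 'a::field) \<times> ('m \<Rightarrow> 'a) \<Rightarrow> ('n \<Rightarrow> 'a) \<times> ('m \<Rightarrow> 'a) \<Rightarrow> 'a) \<Rightarrow> bool" where
  "nondegenerate B \<longleftrightarrow> (\<forall>u. (\<forall>v. B u v = 0) \<longrightarrow> u = (vzero, vzero))"

definition natB :: "('n::finite \<Rightarrow> 'a::field) \<times> ('n \<Rightarrow> 'a) \<Rightarrow> ('n \<Rightarrow> 'a) \<times> ('n \<Rightarrow> 'a) \<Rightarrow> 'a" where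
  "natB u v = pair (fst u) (snd v) + pair (fst v) (snd u)"

end

theory Submission
  imports Defs
begin

definition unitv :: "'n \<Rightarrow> 'n \<Rightarrow> 'a::field" where
  "unitv j = (\<lambda>k. if k = j then 1 else 0)"

definition mk_op :: "(('n::finite \<Rightarrow> 'a::field) \<Rightarrow> ('n \<Rightarrow> 'a) \<Rightarrow> ('n \<Rightarrow> 'a))
   \<Rightarrow> ('n \<Rightarrow> 'a) \<Rightarrow> ('n \<Rightarrow> 'a) \<Rightarrow> ('n \<Rightarrow> 'a)" where
  "mk_op \<rho> x y = (\<lambda>j. pair y (\<rho> x (unitv j)))"

lemma pair_comm: "pair x a = pair a x"
  unfolding pair_def by (simp add: mult.commute)

lemma pair_unit_right[simp]: "pair x (unitv j) = x j"
  unfolding pair_def unitv_def by (simp add: if_distrib cong: if_cong)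

lemma pair_unit_left[simp]: "pair (unitv j) a = a j"
  by (simp add: pair_comm[of "unitv j"])


lemma pair_vadd_l[simp]: "pair (vadd x y) a = pair x a + pair y a"
  unfolding pair_def vadd_def by (simp add: algebra_simps sum.distrib)
lemma pair_vadd_r[simp]: "pair a (vadd x y) = pair a x + pair a y"
  unfolding pair_def vadd_def by (simp add: algebra_simps sum.distrib)
lemma pair_vsub_l[simp]: "pair (vsub x y) a = pair x a - pair y a"
  unfolding pair_def vsub_def by (simp add: algebra_simps sum_subtractf)
lemma pair_vsub_r[simp]: "pair a (vsub x y) = pair a x - pair a y"
  unfolding pair_def vsub_def by (simp add: algebra_simps sum_subtractf)
lemma pair_vscale_l[simp]: "pair (vscale c x) a = c * pair x a"
  unfolding pair_def vscale_def by (simp add: algebra_simps sum_distrib_left)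
lemma pair_vscale_r[simp]: "pair a (vscale c x) = c * pair a x"
  unfolding pair_def vscale_def by (simp add: algebra_simps sum_distrib_left)
lemma pair_vzero_l[simp]: "pair vzero a = 0"
  unfolding pair_def vzero_def by simp
lemma pair_vzero_r[simp]: "pair a vzero = 0"
  unfolding pair_def vzero_def by simp

lemma vec_eq_pair:
  fixes u v :: "'n::finite \<Rightarrow> 'a::field"
  assumes "\<And>a. pair u a = pair v a" shows "u = v"
proof
  fix j show "u j = v j" using assms[of "unitv j"] by simp
qed

lemma linear_zero:
  assumes "linear_map f" shows "f vzero = vzero"
proof -
  have "f (vscale 0 vzero) = vscale 0 (f vzero)" using assms unfolding linear_map_def by blast
  moreover have "vscale 0 vzero = vzero" "vscale 0 (f vzero) = vzero"
    unfolding vscale_def vzero_def by auto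
  ultimately show ?thesis by metis
qed

lemma linear_vsub:
  assumes "linear_map f" shows "f (vsub x y) = vsub (f x) (f y)"
proof -
  have "vsub x y = vadd x (vscale (-1) y)" unfolding vsub_def vadd_def vscale_def by auto
  then have "f (vsub x y) = vadd (f x) (vscale (-1) (f y))"
    using assms unfolding linear_map_def by simp
  also have "\<dots> = vsub (f x) (f y)" unfolding vsub_def vadd_def vscale_def by auto
  finally show ?thesis .
qed

lemma linear_sum_gen:
  assumes "linear_map f" and "finite S"
  shows "f (\<lambda>k. \<Sum>i\<in>S. c i * v i k) = (\<lambda>j. \<Sum>i\<in>S. c i * f (v i) j)"
  using assms(2)
proof (induction S rule: finite_induct)
  case empty
  then show ?case using linear_zero[OF assms(1)] by (simp add: vzero_def)
next
  case (insert a S)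
  have "(\<lambda>k. \<Sum>i\<in>insert a S. c i * v i k) = vadd (vscale (c a) (v a)) (\<lambda>k. \<Sum>i\<in>S. c i * v i k)"
    using insert by (simp add: vadd_def vscale_def)
  then have "f (\<lambda>k. \<Sum>i\<in>insert a S. c i * v i k) = vadd (vscale (c a) (f (v a))) (f (\<lambda>k. \<Sum>i\<in>S. c i * v i k))"
    using assms(1) unfolding linear_map_def by simp
  then show ?case using insert by (simp add: vadd_def vscale_def)
qed

lemma linear_expand:
  fixes f :: "('n::finite \<Rightarrow> 'a::field) \<Rightarrow> ('m \<Rightarrow> 'a)"
  assumes "linear_map f"
  shows "f a = (\<lambda>j. \<Sum>i\<in>UNIV. a i * f (unitv i) j)"
proof -
  have "a = (\<lambda>k. \<Sum>i\<in>UNIV. a i * unitv i k)"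
    unfolding unitv_def by (simp add: if_distrib cong: if_cong)
  then have "f a = f (\<lambda>k. \<Sum>i\<in>UNIV. a i * unitv i k)" by simp
  also have "\<dots> = (\<lambda>j. \<Sum>i\<in>UNIV. a i * f (unitv i) j)"
    by (rule linear_sum_gen[OF assms]) simp
  finally show ?thesis .
qed

lemma pair_neg_dual:
  fixes m :: "('n::finite \<Rightarrow> 'a::field) \<Rightarrow> ('n \<Rightarrow> 'a) \<Rightarrow> ('n \<Rightarrow> 'a)"
  assumes "linear_map (m x)"
  shows "pair z (neg_dual_L m x a) = pair (m x z) a"
proof -
  have "pair z (neg_dual_L m x a) = (\<Sum>i\<in>UNIV. z i * (\<Sum>k\<in>UNIV. m x (unitv i) k * a k))"
    unfolding neg_dual_L_def pair_def unitv_def by simp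
  also have "\<dots> = (\<Sum>k\<in>UNIV. (\<Sum>i\<in>UNIV. z i * m x (unitv i) k) * a k)"
    by (simp add: sum_distrib_left sum_distrib_right mult.assoc) (rule sum.swap)
  also have "\<dots> = pair (m x z) a"
    unfolding pair_def by (subst linear_expand[OF assms, of z]) simp
  finally show ?thesis .
qed

lemma pair_mk_op:
  fixes \<rho> :: "('n::finite \<Rightarrow> 'a::field) \<Rightarrow> ('n \<Rightarrow> 'a) \<Rightarrow> ('n \<Rightarrow> 'a)"
  assumes "linear_map (\<rho> x)"
  shows "pair (mk_op \<rho> x y) a = pair y (\<rho> x a)"
proof -
  have "pair (mk_op \<rho> x y) a = (\<Sum>j\<in>UNIV. (\<Sum>i\<in>UNIV. y i * \<rho> x (unitv j) i) * a j)"
    unfolding mk_op_def pair_def by simp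
  also have "\<dots> = (\<Sum>i\<in>UNIV. y i * (\<Sum>j\<in>UNIV. a j * \<rho> x (unitv j) i))"
    by (simp add: sum_distrib_left sum_distrib_right algebra_simps) (rule sum.swap)
  also have "\<dots> = pair y (\<rho> x a)"
    unfolding pair_def by (subst linear_expand[OF assms, of a]) simp
  finally show ?thesis .
qed


lemma part_a:
  fixes m :: "('n::finite \<Rightarrow> 'a::field) \<Rightarrow> ('n \<Rightarrow> 'a) \<Rightarrow> ('n \<Rightarrow> 'a)"
  assumes "anti_pre_Lie m"
  shows "comm_2cocycle (sd_bracket (commutator m) (neg_dual_L m)) natB"
proof -
  have lin: "\<And>x. linear_map (m x)" using assms unfolding anti_pre_Lie_def bilinear_op_def by blast
  show "comm_2cocycle (sd_bracket (commutator m) (neg_dual_L m)) natB"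
    unfolding comm_2cocycle_def
  proof (intro conjI allI)
    fix u v w :: "('n \<Rightarrow> 'a) \<times> ('n \<Rightarrow> 'a)"
    show "natB (padd u v) w = natB u w + natB v w"
      unfolding natB_def padd_def by (simp add: algebra_simps)
    show "natB u v = natB v u" unfolding natB_def by simp
  next
    fix c and u w :: "('n \<Rightarrow> 'a) \<times> ('n \<Rightarrow> 'a)"
    show "natB (pscale c u) w = c * natB u w"
      unfolding natB_def pscale_def by (simp add: algebra_simps)
  next
    fix x y z :: "('n \<Rightarrow> 'a) \<times> ('n \<Rightarrow> 'a)"
    show "natB (sd_bracket (commutator m) (neg_dual_L m) x y) z +
          natB (sd_bracket (commutator m) (neg_dual_L m) y z) x +
          natB (sd_bracket (commutator m) (neg_dual_L m) z x) y = 0"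
      unfolding natB_def sd_bracket_def commutator_def
      by (simp add: pair_neg_dual[OF lin] algebra_simps)
  qed
qed

lemma nondeg_natB: "nondegenerate (natB :: ('n::finite \<Rightarrow> 'a::field) \<times> ('n \<Rightarrow> 'a) \<Rightarrow> _)"
    unfolding nondegenerate_def
  proof (intro allI impI)
    fix u :: "('n \<Rightarrow> 'a) \<times> ('n \<Rightarrow> 'a)"
    assume h: "\<forall>v. natB u v = 0"
    have "fst u = vzero"
    proof
      fix j show "fst u j = vzero j" using h[rule_format, of "(vzero, unitv j)"]
        by (simp add: natB_def; simp add: vzero_def)
    qed
    moreover have "snd u = vzero"
    proof
      fix j show "snd u j = vzero j" using h[rule_format, of "(unitv j, vzero)"]
        by (simp add: natB_def; simp add: vzero_def)
    qed
    ultimately show "u = (vzero, vzero)" by (simp add: prod_eq_iff)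
  qed


lemma part_b:
  fixes br \<rho> :: "('n::finite \<Rightarrow> 'a::field_char_0) \<Rightarrow> ('n \<Rightarrow> 'a) \<Rightarrow> ('n \<Rightarrow> 'a)"
  assumes L: "lie_algebra br" and R: "representation br \<rho>"
    and C: "comm_2cocycle (sd_bracket br \<rho>) natB"
  shows "\<exists>m. anti_pre_Lie m \<and> (\<forall>x y. commutator m x y = br x y) \<and> \<rho> = neg_dual_L m"
proof -
  define m where "m = mk_op \<rho>"
  have lr: "\<And>x. linear_map (\<rho> x)" using R unfolding representation_def by blast
  have lr2: "\<And>v. linear_map (\<lambda>x. \<rho> x v)" using R unfolding representation_def by blast
  have rep: "\<And>x y v. \<rho> (br x y) v = vsub (\<rho> x (\<rho> y v)) (\<rho> y (\<rho> x v))"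
    using R unfolding representation_def by blast
  have key[simp]: "\<And>x y a. pair (m x y) a = pair y (\<rho> x a)"
    unfolding m_def by (rule pair_mk_op[OF lr])
  have r00: "\<rho> vzero vzero = vzero" using linear_zero[OF lr2[of vzero]] by simp
  have radd: "\<And>x x' v. \<rho> (vadd x x') v = vadd (\<rho> x v) (\<rho> x' v)"
    using lr2 unfolding linear_map_def by blast
  have rsc: "\<And>c x v. \<rho> (vscale c x) v = vscale c (\<rho> x v)"
    using lr2 unfolding linear_map_def by blast
  have rsub: "\<And>x x' v. \<rho> (vsub x x') v = vsub (\<rho> x v) (\<rho> x' v)"
    using linear_vsub[OF lr2] by simp
  have comm: "\<And>x y. commutator m x y = br x y"
  proof -
    fix x y
    show "commutator m x y = br x y"
    proof (rule vec_eq_pair)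
      fix a
      have "natB (sd_bracket br \<rho> (x, vzero) (y, vzero)) (vzero, a) +
            natB (sd_bracket br \<rho> (y, vzero) (vzero, a)) (x, vzero) +
            natB (sd_bracket br \<rho> (vzero, a) (x, vzero)) (y, vzero) = 0"
        using C unfolding comm_2cocycle_def by blast
      then have "pair (br x y) a + pair x (\<rho> y a) - pair y (\<rho> x a) = 0"
        by (simp add: natB_def sd_bracket_def r00)
      then show "pair (commutator m x y) a = pair (br x y) a"
        unfolding commutator_def by (simp add: algebra_simps)
    qed
  qed
  have rc: "\<And>x y v. \<rho> (commutator m x y) v = vsub (\<rho> x (\<rho> y v)) (\<rho> y (\<rho> x v))"
    by (simp add: comm rep)
  have nd: "\<rho> = neg_dual_L m"
    by (intro ext) (simp add: neg_dual_L_def unitv_def[symmetric])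
  have bil: "bilinear_op m"
    unfolding bilinear_op_def linear_map_def
  proof (intro conjI allI)
    fix x y y' :: "'n \<Rightarrow> 'a" and c :: 'a
    show "m x (vadd y y') = vadd (m x y) (m x y')" by (rule vec_eq_pair) simp
    show "m x (vscale c y) = vscale c (m x y)" by (rule vec_eq_pair) simp
    show "m (vadd y y') x = vadd (m y x) (m y' x)" by (rule vec_eq_pair) (simp add: radd)
    show "m (vscale c y) x = vscale c (m y x)" by (rule vec_eq_pair) (simp add: rsc)
  qed
  have id1: "\<And>x y z. vsub (m x (m y z)) (m y (m x z)) = m (commutator m y x) z"
    by (rule vec_eq_pair) (simp add: rc)
  have id2: "vadd (vadd (m (commutator m x y) z) (m (commutator m y z) x)) (m (commutator m z x) y) = vzero"
    for x y z
  proof (rule vec_eq_pair)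
    fix a
    have J: "vadd (vadd (br x (br y z)) (br y (br z x))) (br z (br x y)) = vzero"
      using L unfolding lie_algebra_def by blast
    have "pair (vadd (vadd (br x (br y z)) (br y (br z x))) (br z (br x y))) a = 0"
      by (simp add: J)
    then have J2: "pair (vadd (vadd (commutator m x (commutator m y z)) (commutator m y (commutator m z x)))
         (commutator m z (commutator m x y))) a = 0" by (simp add: comm)
    let ?S = "pair (vadd (vadd (m (commutator m x y) z) (m (commutator m y z) x)) (m (commutator m z x) y)) a"
    have pc: "\<And>u v b. pair (commutator m u v) b = pair v (\<rho> u b) - pair u (\<rho> v b)"
      unfolding commutator_def by simp
    have "?S + ?S = 0" using J2 by (simp add: rc pc algebra_simps)
    then have "2 * ?S = 0" by (simp only: mult_2)
    then have "?S = 0" by (metis mult_eq_0_iff zero_neq_numeral)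
    then show "?S = pair vzero a" by simp
  qed
  have "anti_pre_Lie m" unfolding anti_pre_Lie_def using bil id1 id2 by blast
  then show ?thesis using comm nd by blast
qed

theorem proposition2p26:
  fixes dummy :: "'n::finite \<Rightarrow> 'a::field_char_0"
  shows "(\<forall>m :: ('n \<Rightarrow> 'a) \<Rightarrow> ('n \<Rightarrow> 'a) \<Rightarrow> ('n \<Rightarrow> 'a).
            anti_pre_Lie m \<longrightarrow>
              comm_2cocycle (sd_bracket (commutator m) (neg_dual_L m)) natB \<and> nondegenerate natB)
       \<and> (\<forall>(br :: ('n \<Rightarrow> 'a) \<Rightarrow> ('n \<Rightarrow> 'a) \<Rightarrow> ('n \<Rightarrow> 'a)) (\<rho> :: ('n \<Rightarrow> 'a) \<Rightarrow> ('n \<Rightarrow> 'a) \<Rightarrow> ('n \<Rightarrow> 'a)).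
            lie_algebra br \<and> representation br \<rho> \<and> comm_2cocycle (sd_bracket br \<rho>) natB \<longrightarrow>
              (\<exists>m. anti_pre_Lie m \<and> (\<forall>x y. commutator m x y = br x y) \<and> \<rho> = neg_dual_L m))"
  using part_a part_b nondeg_natB by blast

end
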